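(* Let $\mathbb{F}_3$ be the free group on generators $a,b,c$, let $r = aba^{-1}b^{-1}c$, and let $N \subset \mathbb{F}_3$ be the normal closure of $r$. For $w \in N$ define its combinatorial area $A(w)$ as the minimal $d\ge 0$ such that $$w = \prod_{i=1}^d g_i r^{\pm 1} g_i^{-1}, \quad g_i \in \mathbb{F}_3,$$ and define its $(a,b)$-length $l(w)$ as the number of occurrences of the letters $a^{\pm 1}, b^{\pm 1}$ in the cyclic reduction of $w$ (occurrences of $c^{\pm1}$ are not counted). Then $A(w) \leq \frac{1}{2} l(w)$ for every $w \in N$. *)

theory Defs
  imports Complex_Main
begin

text \<open>The free group F_3 on generators a, b, c, modelled concretely by words
  over the letters a, b, c and their inverses; two words represent the same
  group element iff they have the same free reduction.\<close>

datatype gen = Ga | Gb | Gc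

type_synonym letter = "gen \<times> bool"   \<comment> \<open>(x, True) = x, (x, False) = x^-1\<close>
type_synonym word = "letter list"

definition inv_letter :: "letter \<Rightarrow> letter" where
  "inv_letter l = (fst l, \<not> snd l)"

definition inv_word :: "word \<Rightarrow> word" where
  "inv_word w = rev (map inv_letter w)"

fun red_cons :: "letter \<Rightarrow> word \<Rightarrow> word" where
  "red_cons x [] = [x]"
| "red_cons x (y # ys) = (if y = inv_letter x then ys else x # y # ys)"

definition reduce :: "word \<Rightarrow> word" where
  "reduce w = foldr red_cons w []"

function cyc_red :: "word \<Rightarrow> word" where
  "cyc_red w = (if 2 \<le> length w \<and> last w = inv_letter (hd w)
                then cyc_red (butlast (tl w)) else w)"
  by auto
termination by (relation "measure length") (auto simp: length_butlast)

definition cyclic_reduction :: "word \<Rightarrow> word" where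
  "cyclic_reduction w = cyc_red (reduce w)"

definition ab_length :: "word \<Rightarrow> nat" where
  "ab_length w = length (filter (\<lambda>l. fst l \<noteq> Gc) (cyclic_reduction w))"

definition rel :: word where
  "rel = [(Ga, True), (Gb, True), (Ga, False), (Gb, False), (Gc, True)]"

definition conj_prod :: "(word \<times> bool) list \<Rightarrow> word" where
  "conj_prod gs = concat (map (\<lambda>(g, e). g @ (if e then rel else inv_word rel) @ inv_word g) gs)"

definition in_N :: "word \<Rightarrow> bool" where
  "in_N w \<longleftrightarrow> (\<exists>gs. reduce w = reduce (conj_prod gs))"

definition area :: "word \<Rightarrow> nat" where
  "area w = (LEAST d. \<exists>gs. length gs = d \<and> reduce w = reduce (conj_prod gs))"

end

theory Submission
  imports Defs
begin

lemma inv_inv[simp]: "inv_letter (inv_letter x) = x"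
  by (simp add: inv_letter_def)
lemma inv_neq[simp]: "inv_letter x \<noteq> x" "x \<noteq> inv_letter x"
  by (auto simp: inv_letter_def prod_eq_iff)
lemma inv_letter_eq_iff[simp]: "inv_letter x = inv_letter y \<longleftrightarrow> x = y"
  by (metis inv_inv)

lemma inv_word_Nil[simp]: "inv_word [] = []" by (simp add: inv_word_def)
lemma inv_word_Cons[simp]: "inv_word (x # xs) = inv_word xs @ [inv_letter x]"
  by (simp add: inv_word_def)
lemma inv_word_append[simp]: "inv_word (xs @ ys) = inv_word ys @ inv_word xs"
  by (simp add: inv_word_def)
lemma inv_word_inv_word[simp]: "inv_word (inv_word xs) = xs"
  by (simp add: inv_word_def rev_map comp_def)

fun reduced :: "word \<Rightarrow> bool" where
  "reduced [] = True"
| "reduced [x] = True"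
| "reduced (x # y # ys) = (y \<noteq> inv_letter x \<and> reduced (y # ys))"

lemma reduced_Cons: "reduced (x # ys) \<longleftrightarrow> reduced ys \<and> (ys = [] \<or> hd ys \<noteq> inv_letter x)"
  by (cases ys) auto

lemma reduced_red_cons: "reduced ys \<Longrightarrow> reduced (red_cons x ys)"
  by (cases ys) (auto simp: reduced_Cons)

lemma reduce_Nil[simp]: "reduce [] = []" by (simp add: reduce_def)
lemma reduce_Cons: "reduce (x # xs) = red_cons x (reduce xs)" by (simp add: reduce_def)

lemma reduced_reduce[simp]: "reduced (reduce w)"
  by (induction w) (auto simp: reduce_Cons intro: reduced_red_cons)

lemma reduce_reduced: "reduced w \<Longrightarrow> reduce w = w"
proof (induction w)
  case Nil then show ?case by simp
next
  case (Cons x w)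
  then have "reduced w" by (simp add: reduced_Cons)
  with Cons show ?case by (cases w) (auto simp: reduce_Cons)
qed

lemma reduce_reduce[simp]: "reduce (reduce w) = reduce w"
  by (simp add: reduce_reduced)

lemma red_cons_cancel: "reduced ys \<Longrightarrow> red_cons x (red_cons (inv_letter x) ys) = ys"
proof (cases ys)
  case (Cons y list)
  assume "reduced ys"
  then show ?thesis using Cons by (cases list) (auto simp: reduced_Cons)
qed simp

lemma reduce_append: "reduce (xs @ ys) = foldr red_cons xs (reduce ys)"
  by (simp add: reduce_def)

lemma reduced_foldr: "reduced zs \<Longrightarrow> reduced (foldr red_cons xs zs)"
  by (induction xs) (auto intro: reduced_red_cons)

lemma foldr_red_cons: "reduced m \<Longrightarrow> reduced zs \<Longrightarrow>
   foldr red_cons (red_cons x m) zs = red_cons x (foldr red_cons m zs)"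
proof (cases m)
  case Nil then show ?thesis by simp
next
  case (Cons y m')
  assume zs: "reduced zs"
  show ?thesis
  proof (cases "y = inv_letter x")
    case True
    have "red_cons x (foldr red_cons m zs) = red_cons x (red_cons (inv_letter x) (foldr red_cons m' zs))"
      using Cons True by simp
    also have "\<dots> = foldr red_cons m' zs"
      by (rule red_cons_cancel) (rule reduced_foldr[OF zs])
    finally show ?thesis using Cons True by simp
  next
    case False
    then show ?thesis using Cons by simp
  qed
qed

lemma foldr_reduce: "reduced zs \<Longrightarrow> foldr red_cons (reduce xs) zs = foldr red_cons xs zs"
  by (induction xs) (simp_all add: reduce_Cons foldr_red_cons)

lemma reduce_append_left: "reduce (reduce xs @ ys) = reduce (xs @ ys)"
  by (simp add: reduce_append foldr_reduce)

lemma reduce_append_right: "reduce (xs @ reduce ys) = reduce (xs @ ys)"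
  by (simp add: reduce_append)

lemma reduce_inv_cancel: "reduce (inv_word xs @ xs) = []"
proof (induction xs)
  case Nil then show ?case by simp
next
  case (Cons x xs)
  have "reduce (inv_word (x # xs) @ x # xs) = foldr red_cons (inv_word xs) (reduce ([inv_letter x] @ x # xs))"
    by (simp add: reduce_append[symmetric])
  also have "reduce ([inv_letter x] @ x # xs) = reduce xs"
    using red_cons_cancel[of "reduce xs" "inv_letter x"] by (simp add: reduce_Cons)
  finally show ?case using Cons by (simp add: reduce_append)
qed

lemma reduce_inv_cancel2: "reduce (xs @ inv_word xs) = []"
  using reduce_inv_cancel[of "inv_word xs"] by simp

typedef fg = "{w :: word. reduce w = w}"
  by (rule exI[of _ "[]"]) simp

lemma Rep_fg_red[simp]: "reduce (Rep_fg x) = Rep_fg x"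
  using Rep_fg[of x] by simp

lemma Rep_Abs_reduce[simp]: "Rep_fg (Abs_fg (reduce w)) = reduce w"
  by (rule Abs_fg_inverse) simp

instantiation fg :: group_add
begin
definition zero_fg_def: "0 = Abs_fg []"
definition plus_fg_def: "x + y = Abs_fg (reduce (Rep_fg x @ Rep_fg y))"
definition uminus_fg_def: "- x = Abs_fg (reduce (inv_word (Rep_fg x)))"
definition minus_fg_def: "x - y = x + - (y::fg)"
instance
proof
  fix a b c :: fg
  show "a + b + c = a + (b + c)"
    unfolding plus_fg_def
    by (simp add: reduce_append_left reduce_append_right)
  show "0 + a = a"
    unfolding plus_fg_def zero_fg_def
    using Abs_fg_inverse[of "[]"] by (simp add: Rep_fg_inverse)
  show "a + 0 = a"
    unfolding plus_fg_def zero_fg_def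
    using Abs_fg_inverse[of "[]"] by (simp add: Rep_fg_inverse)
  show "- a + a = 0"
    unfolding plus_fg_def zero_fg_def uminus_fg_def
    by (simp add: reduce_append_left reduce_inv_cancel)
  show "a + - b = a - b" by (simp add: minus_fg_def)
qed
end

definition elem :: "word \<Rightarrow> fg" where
  "elem w = Abs_fg (reduce w)"

lemma Rep_elem[simp]: "Rep_fg (elem w) = reduce w"
  by (simp add: elem_def)

lemma elem_eq_iff: "elem u = elem v \<longleftrightarrow> reduce u = reduce v"
  unfolding elem_def by (metis Rep_Abs_reduce)

lemma elem_Nil[simp]: "elem [] = 0"
  by (simp add: elem_def zero_fg_def)

lemma elem_append: "elem (u @ v) = elem u + elem v"
  unfolding elem_def plus_fg_def
  by (simp add: reduce_append_left reduce_append_right)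

lemma elem_Cons: "elem (x # v) = elem [x] + elem v"
  using elem_append[of "[x]" v] by simp

lemma elem_Rep[simp]: "elem (Rep_fg x) = x"
  by (simp add: elem_def Rep_fg_inverse)

lemma elem_reduce[simp]: "elem (reduce w) = elem w"
  by (simp add: elem_def)

lemma elem_inv_word: "elem (inv_word u) = - elem u"
proof -
  have "elem (inv_word u) + elem u = 0"
    by (simp add: elem_append[symmetric] elem_eq_iff[of _ "[]", simplified] reduce_inv_cancel)
  then show ?thesis by (simp add: eq_neg_iff_add_eq_0)
qed

lemma elem_inv_cancel[simp]: "elem [x, inv_letter x] = 0"
  using elem_eq_iff[of "[x] @ inv_word [x]" "[]"] reduce_inv_cancel2[of "[x]"] by simp

declare add_uminus_conv_diff[simp del]
declare diff_conv_add_uminus[simp]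

definition subst :: "(letter \<Rightarrow> word) \<Rightarrow> word \<Rightarrow> word" where
  "subst f w = concat (map f w)"

lemma subst_Nil[simp]: "subst f [] = []" by (simp add: subst_def)
lemma subst_Cons[simp]: "subst f (x # w) = f x @ subst f w" by (simp add: subst_def)
lemma subst_append[simp]: "subst f (u @ v) = subst f u @ subst f v" by (simp add: subst_def)

definition inv_compat :: "(letter \<Rightarrow> word) \<Rightarrow> bool" where
  "inv_compat f \<longleftrightarrow> (\<forall>x. f (inv_letter x) = inv_word (f x))"

lemma inv_compatD: "inv_compat f \<Longrightarrow> f (inv_letter x) = inv_word (f x)"
  unfolding inv_compat_def by blast

lemma elem_subst_red_cons:
  assumes "inv_compat f"
  shows "elem (subst f (red_cons x m)) = elem (f x) + elem (subst f m)"
proof (cases m)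
  case Nil then show ?thesis by (simp add: elem_append)
next
  case (Cons y m')
  show ?thesis
  proof (cases "y = inv_letter x")
    case True
    have "elem (f y) = - elem (f x)" using inv_compatD[OF assms, of x] True by (simp add: elem_inv_word)
    then show ?thesis using Cons True by (simp add: elem_append add.assoc[symmetric])
  next
    case False then show ?thesis using Cons by (simp add: elem_append)
  qed
qed

lemma elem_subst_reduce:
  assumes "inv_compat f"
  shows "elem (subst f (reduce w)) = elem (subst f w)"
  by (induction w) (simp_all add: reduce_Cons elem_subst_red_cons[OF assms] elem_append)

lemma elem_subst_cong:
  assumes "inv_compat f" "elem u = elem v"
  shows "elem (subst f u) = elem (subst f v)"
  using assms elem_subst_reduce[OF assms(1)] by (metis elem_eq_iff)

lemma elem_subst_inv:
  assumes "inv_compat f"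
  shows "elem (subst f (inv_word u)) = - elem (subst f u)"
proof -
  have "subst f (inv_word u) = inv_word (subst f u)"
    using assms by (induction u) (simp_all add: inv_compatD)
  then show ?thesis by (simp add: elem_inv_word)
qed

definition beta :: word where
  "beta = [(Gb,True),(Ga,True),(Gb,False),(Ga,False)]"

fun phil :: "letter \<Rightarrow> word" where
  "phil (Gc, True) = beta"
| "phil (Gc, False) = inv_word beta"
| "phil (Ga, e) = [(Ga, e)]"
| "phil (Gb, e) = [(Gb, e)]"

definition phi :: "word \<Rightarrow> word" where
  "phi = subst phil"

lemma inv_compat_phil: "inv_compat phil"
  unfolding inv_compat_def
proof
  fix x :: letter
  obtain g e where x: "x = (g, e)" by (cases x)
  show "phil (inv_letter x) = inv_word (phil x)"
    by (cases g; cases e) (simp_all add: x inv_letter_def beta_def)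
qed

definition R :: fg where "R = elem rel"

lemma conj_prod_Nil[simp]: "conj_prod [] = []" by (simp add: conj_prod_def)
lemma conj_prod_Cons[simp]: "conj_prod ((g, e) # gs) = (g @ (if e then rel else inv_word rel) @ inv_word g) @ conj_prod gs"
  by (simp add: conj_prod_def)
lemma conj_prod_append[simp]: "conj_prod (gs @ hs) = conj_prod gs @ conj_prod hs"
  by (simp add: conj_prod_def)

lemma elem_conj_map:
  "elem (conj_prod (map (\<lambda>(h, e). (g @ h, e)) gs)) = elem g + elem (conj_prod gs) - elem g"
proof (induction gs)
  case Nil then show ?case by simp
next
  case (Cons he gs)
  obtain h e where he: "he = (h, e)" by (cases he)
  show ?case using Cons
    by (simp add: he elem_append elem_inv_word add.assoc minus_add)
qed

lemma area_le: "elem w = elem (conj_prod gs) \<Longrightarrow> area w \<le> length gs"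
  unfolding area_def by (rule Least_le) (auto simp: elem_eq_iff)

lemma in_N_elem: "in_N w \<longleftrightarrow> (\<exists>gs. elem w = elem (conj_prod gs))"
  by (simp add: in_N_def elem_eq_iff)

lemma area_ex: assumes "in_N w" shows "\<exists>gs. length gs = area w \<and> elem w = elem (conj_prod gs)"
proof -
  from assms obtain gs where "reduce w = reduce (conj_prod gs)" by (auto simp: in_N_def)
  then have "\<exists>d gs. length gs = d \<and> reduce w = reduce (conj_prod gs)" by blast
  then have "\<exists>gs. length gs = area w \<and> reduce w = reduce (conj_prod gs)"
    unfolding area_def by (rule LeastI_ex)
  then show ?thesis by (simp add: elem_eq_iff)
qed

lemma area_cong: "elem w = elem w' \<Longrightarrow> area w = area w'"
  unfolding area_def by (simp add: elem_eq_iff)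

definition count_c :: "word \<Rightarrow> nat" where
  "count_c w = length (filter (\<lambda>l. fst l = Gc) w)"
definition count_ab :: "word \<Rightarrow> nat" where
  "count_ab w = length (filter (\<lambda>l. fst l \<noteq> Gc) w)"

lemma elem_c: "elem [(Gc,True)] = elem beta + R"
proof -
  have "elem rel = elem (inv_word beta @ [(Gc,True)])" by (simp add: rel_def beta_def inv_letter_def)
  then have "R = - elem beta + elem [(Gc,True)]" by (simp add: R_def elem_append elem_inv_word)
  then show ?thesis by (metis add_minus_cancel)
qed

lemma elem_C: "elem [(Gc,False)] = - R - elem beta"
proof -
  have "elem [(Gc,False)] = - elem [(Gc,True)]"
    using elem_inv_word[of "[(Gc,True)]"] by (simp add: inv_letter_def)
  then show ?thesis by (simp add: elem_c minus_add)
qed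


lemma lemmaC: "\<exists>gs. length gs = count_c w \<and> elem w = elem (conj_prod gs) + elem (phi w)"
proof (induction w)
  case Nil then show ?case by (simp add: count_c_def phi_def)
next
  case (Cons x w)
  then obtain gs where gs: "length gs = count_c w" "elem w = elem (conj_prod gs) + elem (phi w)" by blast
  obtain g e where x: "x = (g, e)" by (cases x)
  have ex: "elem (x # w) = elem [x] + elem w" by (rule elem_Cons)
  show ?case
  proof (cases g)
    case Gc
    show ?thesis
    proof (cases e)
      case True
      let ?gs = "(beta, True) # map (\<lambda>(h, e). (beta @ h, e)) gs"
      have "elem (x # w) = elem beta + R + (elem (conj_prod gs) + elem (phi w))"
        using gs ex by (simp add: x Gc True elem_c)
      also have "\<dots> = elem (conj_prod ?gs) + elem (phi (x # w))"
        by (simp add: elem_conj_map elem_append elem_inv_word R_def[symmetric] phi_def x Gc True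
             add.assoc)
      finally have eq: "elem (x # w) = elem (conj_prod ?gs) + elem (phi (x # w))" .
      show ?thesis by (rule exI[of _ "?gs"]) (use gs(1) eq in \<open>simp add: count_c_def x Gc\<close>)
    next
      case False
      let ?gs = "([], False) # map (\<lambda>(h, e). (inv_word beta @ h, e)) gs"
      have "elem (x # w) = - R - elem beta + (elem (conj_prod gs) + elem (phi w))"
        using gs ex by (simp add: x Gc False elem_C)
      also have "\<dots> = elem (conj_prod ?gs) + elem (phi (x # w))"
        by (simp add: elem_conj_map elem_append elem_inv_word R_def[symmetric] phi_def x Gc False
             add.assoc)
      finally have eq: "elem (x # w) = elem (conj_prod ?gs) + elem (phi (x # w))" .
      show ?thesis by (rule exI[of _ "?gs"]) (use gs(1) eq in \<open>simp add: count_c_def x Gc\<close>)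
    qed
  next
    case Ga
    let ?gs = "map (\<lambda>(h, e). ([x] @ h, e)) gs"
    have "elem (x # w) = elem [x] + (elem (conj_prod gs) + elem (phi w))"
      using gs ex by simp
    also have "\<dots> = elem (conj_prod ?gs) + elem (phi (x # w))"
    proof -
      have c1: "elem (conj_prod ?gs) = elem [x] + elem (conj_prod gs) - elem [x]" by (rule elem_conj_map)
      have c2: "elem (phi (x # w)) = elem [x] + elem (phi w)"
        using elem_append[of "[x]" "phi w"] by (simp add: phi_def x Ga)
      show ?thesis unfolding c1 c2 by (simp add: add.assoc)
    qed
    finally have eq: "elem (x # w) = elem (conj_prod ?gs) + elem (phi (x # w))" .
      show ?thesis by (rule exI[of _ "?gs"]) (use gs(1) eq in \<open>simp add: count_c_def x Ga\<close>)
  next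
    case Gb
    let ?gs = "map (\<lambda>(h, e). ([x] @ h, e)) gs"
    have "elem (x # w) = elem [x] + (elem (conj_prod gs) + elem (phi w))"
      using gs ex by simp
    also have "\<dots> = elem (conj_prod ?gs) + elem (phi (x # w))"
    proof -
      have c1: "elem (conj_prod ?gs) = elem [x] + elem (conj_prod gs) - elem [x]" by (rule elem_conj_map)
      have c2: "elem (phi (x # w)) = elem [x] + elem (phi w)"
        using elem_append[of "[x]" "phi w"] by (simp add: phi_def x Gb)
      show ?thesis unfolding c1 c2 by (simp add: add.assoc)
    qed
    finally have eq: "elem (x # w) = elem (conj_prod ?gs) + elem (phi (x # w))" .
      show ?thesis by (rule exI[of _ "?gs"]) (use gs(1) eq in \<open>simp add: count_c_def x Gb\<close>)
  qed
qed

lemma Phi_append: "elem (phi (u @ v)) = elem (phi u) + elem (phi v)"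
  by (simp add: phi_def elem_append)

lemma Phi_inv: "elem (phi (inv_word u)) = - elem (phi u)"
  unfolding phi_def by (rule elem_subst_inv[OF inv_compat_phil])

lemma Phi_cong: "elem u = elem v \<Longrightarrow> elem (phi u) = elem (phi v)"
  unfolding phi_def by (rule elem_subst_cong[OF inv_compat_phil])

lemma Phi_rel: "elem (phi rel) = 0"
proof -
  have "phi rel = inv_word beta @ beta"
    by (simp add: phi_def rel_def beta_def inv_letter_def)
  then show ?thesis by (simp add: elem_append elem_inv_word)
qed

lemma Phi_conj_prod: "elem (phi (conj_prod gs)) = 0"
proof (induction gs)
  case Nil then show ?case by (simp add: phi_def)
next
  case (Cons he gs)
  obtain h e where he: "he = (h, e)" by (cases he)
  show ?case using Cons
    by (simp add: he Phi_append Phi_inv Phi_rel add.assoc)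
qed

lemma in_N_Phi: "in_N w \<Longrightarrow> elem (phi w) = 0"
proof -
  assume "in_N w"
  then obtain gs where "elem w = elem (conj_prod gs)" by (auto simp: in_N_elem)
  then have "elem (phi w) = elem (phi (conj_prod gs))" by (rule Phi_cong)
  then show ?thesis by (simp add: Phi_conj_prod)
qed

lemma Phi_area: assumes "elem (phi w) = 0"
  shows "in_N w" "area w \<le> count_c w"
proof -
  obtain gs where gs: "length gs = count_c w" "elem w = elem (conj_prod gs) + elem (phi w)"
    using lemmaC by blast
  then have "elem w = elem (conj_prod gs)" using assms by simp
  then have e: "elem w = elem (conj_prod gs)" .
  show "in_N w" unfolding in_N_elem using e by blast
  show "area w \<le> count_c w" using area_le[OF e] gs(1) by simp
qed

lemma area_conj_le:
  assumes "elem w = elem g + elem v - elem g" "elem (phi v) = 0"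
  shows "area w \<le> area v"
proof -
  obtain gs where gs: "length gs = area v" "elem v = elem (conj_prod gs)"
    using area_ex Phi_area(1)[OF assms(2)] by blast
  have "elem w = elem (conj_prod (map (\<lambda>(h, e). (g @ h, e)) gs))"
    using assms(1) gs(2) by (simp add: elem_conj_map)
  then show ?thesis using area_le gs(1) by fastforce
qed

lemma area_split_le:
  assumes "elem w = elem u + elem v" "elem (phi u) = 0" "elem (phi v) = 0"
  shows "area w \<le> area u + area v"
proof -
  obtain gs where gs: "length gs = area u" "elem u = elem (conj_prod gs)"
    using area_ex Phi_area(1)[OF assms(2)] by blast
  obtain hs where hs: "length hs = area v" "elem v = elem (conj_prod hs)"
    using area_ex Phi_area(1)[OF assms(3)] by blast
  have "elem w = elem (conj_prod (gs @ hs))"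
    using assms(1) gs(2) hs(2) by (simp add: elem_append)
  then show ?thesis using area_le gs(1) hs(1) by fastforce
qed

declare cyc_red.simps[simp del]

lemma cyc_red_T: "2 \<le> length w \<and> last w = inv_letter (hd w) \<Longrightarrow> cyc_red w = cyc_red (butlast (tl w))"
proof -
  assume T: "2 \<le> length w \<and> last w = inv_letter (hd w)"
  have e: "cyc_red w = (if 2 \<le> length w \<and> last w = inv_letter (hd w)
                then cyc_red (butlast (tl w)) else w)" by (rule cyc_red.simps)
  show ?thesis by (subst e) (rule if_P[OF T])
qed

lemma cyc_red_F: "\<not> (2 \<le> length w \<and> last w = inv_letter (hd w)) \<Longrightarrow> cyc_red w = w"
proof -
  assume T: "\<not> (2 \<le> length w \<and> last w = inv_letter (hd w))"
  have e: "cyc_red w = (if 2 \<le> length w \<and> last w = inv_letter (hd w)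
                then cyc_red (butlast (tl w)) else w)" by (rule cyc_red.simps)
  show ?thesis by (subst e) (rule if_not_P[OF T])
qed

lemma cyc_red_conj: "\<exists>g. u = g @ cyc_red u @ inv_word g"
proof (induction u rule: cyc_red.induct)
  case (1 w)
  show ?case
  proof (cases "2 \<le> length w \<and> last w = inv_letter (hd w)")
    case True
    then obtain g where g: "butlast (tl w) = g @ cyc_red (butlast (tl w)) @ inv_word g"
      using 1 by blast
    have cw: "cyc_red w = cyc_red (butlast (tl w))" using True by (rule cyc_red_T)
    have ne: "tl w \<noteq> []" using True by (cases w) auto
    define m where "m = butlast (tl w)"
    define h where "h = hd w"
    have w: "w = [h] @ m @ [inv_letter h]"
    proof -
      obtain a list where wal: "w = a # list" using ne by (cases w) auto
      have lne: "list \<noteq> []" using ne wal by simp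
      have la: "last list = inv_letter a" using True wal lne by simp
      have l2: "butlast list @ [inv_letter a] = list"
        using append_butlast_last_id[OF lne] la by simp
      show ?thesis unfolding m_def h_def wal using l2 by simp
    qed
    have "(h # g) @ cyc_red w @ inv_word (h # g) = [h] @ (g @ cyc_red m @ inv_word g) @ [inv_letter h]"
      by (simp add: cw m_def)
    also have "\<dots> = w"
    proof -
      have gm: "g @ cyc_red m @ inv_word g = m" unfolding m_def by (rule g[symmetric])
      show ?thesis unfolding w by (simp only: gm)
    qed
    finally have "w = (h # g) @ cyc_red w @ inv_word (h # g)" by (rule sym)
    then show ?thesis by blast
  next
    case False
    have cw: "cyc_red w = w" using False by (rule cyc_red_F)
    show ?thesis by (rule exI[of _ "[]"]) (simp add: cw)
  qed
qed

lemma grp_conj_zero: fixes a b :: "'a::group_add" assumes h: "a + b - a = 0" shows "b = 0"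
proof -
  have "a + b = (a + b - a) + a" by (simp add: add.assoc)
  then have "a + b = a + 0" using h by simp
  then show "b = 0" by (simp only: add_left_cancel)
qed

lemma elem_cancel2[simp]: "elem (x # inv_letter x # ys) = elem ys"
  using elem_append[of "[x, inv_letter x]" ys] by simp


lemma reduced_append_single:
  "reduced (xs @ [y]) \<longleftrightarrow> reduced xs \<and> (xs = [] \<or> last xs \<noteq> inv_letter y)"
proof (induction xs rule: reduced.induct)
  case 1 then show ?case by simp
next
  case (2 x) then show ?case by (auto simp: inv_letter_def prod_eq_iff)
next
  case (3 x y ys) then show ?case by auto
qed

lemma elem_inv_cancel'[simp]: "elem [inv_letter x, x] = 0"
  using elem_inv_cancel[of "inv_letter x"] by simp

lemma reduce_single[simp]: "reduce [s] = [s]"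
  by (simp add: reduce_Cons)

lemma reduced_butlast: "reduced xs \<Longrightarrow> reduced (butlast xs)"
  by (induction xs rule: reduced.induct) (auto simp: reduced_Cons)

lemma reduced_Rep: "reduced (Rep_fg x)"
  using reduced_reduce[of "Rep_fg x"] by simp

lemma reduce_snoc:
  assumes "reduced m"
  shows "reduce (m @ [s]) = (if m \<noteq> [] \<and> last m = inv_letter s then butlast m else m @ [s])"
proof (cases "m \<noteq> [] \<and> last m = inv_letter s")
  case True
  then have m: "m = butlast m @ [inv_letter s]" by (metis append_butlast_last_id)
  have "elem (m @ [s]) = elem (butlast m)"
  proof -
    have "m @ [s] = butlast m @ [inv_letter s, s]"
      by (subst m) simp
    then have "elem (m @ [s]) = elem (butlast m @ [inv_letter s, s])" by (rule arg_cong)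
    also have "\<dots> = elem (butlast m)" by (simp add: elem_append)
    finally show ?thesis .
  qed
  then have "reduce (m @ [s]) = reduce (butlast m)" by (simp add: elem_eq_iff)
  also have "\<dots> = butlast m" by (rule reduce_reduced[OF reduced_butlast[OF assms]])
  finally show ?thesis using True by simp
next
  case False
  then have "reduced (m @ [s])" using assms by (auto simp: reduced_append_single)
  then show ?thesis unfolding if_not_P[OF False] by (rule reduce_reduced)
qed

lemma Rep_single: "Rep_fg (elem [s]) = [s]"
  by (simp add: reduce_Cons)

lemma Rep_plus_letter:
  "Rep_fg (u + elem [s]) = (if Rep_fg u \<noteq> [] \<and> last (Rep_fg u) = inv_letter s
      then butlast (Rep_fg u) else Rep_fg u @ [s])"
proof -
  have "Rep_fg (u + elem [s]) = reduce (Rep_fg u @ [s])"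
    by (simp add: plus_fg_def Rep_single)
  then show ?thesis using reduce_snoc[OF reduced_Rep] by simp
qed

lemma Rep_zero[simp]: "Rep_fg 0 = []"
  by (simp add: zero_fg_def Abs_fg_inverse)

lemma Rep_eq_Nil: "Rep_fg x = [] \<longleftrightarrow> x = 0"
  by (metis Rep_fg_inverse Rep_zero)


lemma Rep_eq_single: "Rep_fg x = [s] \<longleftrightarrow> x = elem [s]"
  by (metis Rep_fg_inverse Rep_single)

definition sideI :: "fg \<Rightarrow> letter \<Rightarrow> fg \<Rightarrow> int" where
  "sideI y s0 z = (if Rep_fg (- y + z) \<noteq> [] \<and> hd (Rep_fg (- y + z)) = s0 then 1 else 0)"

lemma step_list:
  fixes m :: word and s s0 :: letter
  defines "m' \<equiv> (if m \<noteq> [] \<and> last m = inv_letter s then butlast m else m @ [s])"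
  shows "(if m' \<noteq> [] \<and> hd m' = s0 then 1 else 0) - (if m \<noteq> [] \<and> hd m = s0 then 1 else 0)
    = (of_bool (m = [] \<and> s = s0) - of_bool (m = [s0] \<and> s = inv_letter s0) :: int)"
proof (cases m)
  case Nil then show ?thesis by (simp add: m'_def)
next
  case (Cons x r)
  show ?thesis
  proof (cases r)
    case Nil
    then show ?thesis using Cons by (auto simp: m'_def)
  next
    case (Cons x2 r2)
    then have "hd m' = hd m" "m' \<noteq> []" using \<open>m = x # r\<close> by (auto simp: m'_def)
    then show ?thesis using Cons \<open>m = x # r\<close> by auto
  qed
qed

lemma step:
  "sideI y s0 (z + elem [s]) - sideI y s0 z
     = of_bool (z = y \<and> s = s0) - of_bool (z = y + elem [s0] \<and> s = inv_letter s0)"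
proof -
  define m where "m = Rep_fg (- y + z)"
  have r: "Rep_fg (- y + (z + elem [s])) = (if m \<noteq> [] \<and> last m = inv_letter s then butlast m else m @ [s])"
    unfolding m_def add.assoc[symmetric] by (rule Rep_plus_letter)
  have e1: "(z = y) \<longleftrightarrow> m = []"
    unfolding m_def Rep_eq_Nil by (metis add.left_inverse add_minus_cancel add.right_neutral)
  have e2: "(z = y + elem [s0]) \<longleftrightarrow> m = [s0]"
    unfolding m_def Rep_eq_single by (metis add_minus_cancel minus_add_cancel)
  show ?thesis
    unfolding sideI_def r e1 e2 m_def[symmetric] by (rule step_list)
qed

definition ea :: fg where "ea = elem [(Ga,True)]"
definition eb :: fg where "eb = elem [(Gb,True)]"
definition g2 :: fg where "g2 = elem [(Gb,True),(Ga,True),(Gb,False)]"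

lemma elem_A: "elem [(Ga,False)] = - ea"
  using elem_inv_word[of "[(Ga,True)]"] by (simp add: ea_def inv_letter_def)
lemma elem_B: "elem [(Gb,False)] = - eb"
  using elem_inv_word[of "[(Gb,True)]"] by (simp add: eb_def inv_letter_def)

lemma elem4: "elem [s1, s2, s3, s4] = elem [s1] + elem [s2] + elem [s3] + elem [s4]"
  using elem_append[of "[s1]" "[s2, s3, s4]"] elem_append[of "[s2]" "[s3, s4]"] elem_append[of "[s3]" "[s4]"]
  by (simp add: add.assoc)

lemma elem_beta: "elem beta = eb + ea - eb - ea"
  unfolding beta_def elem4 elem_A elem_B ea_def eb_def by simp

lemma g2_eq: "g2 = eb + ea - eb"
  unfolding g2_def using elem_append[of "[(Gb,True)]" "[(Ga,True),(Gb,False)]"] elem_append[of "[(Ga,True)]" "[(Gb,False)]"]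
  by (simp add: add.assoc elem_B eb_def ea_def)

definition St :: "fg \<Rightarrow> letter \<Rightarrow> fg \<Rightarrow> letter \<Rightarrow> int" where
  "St y s0 z s = of_bool (z = y \<and> s = s0) - of_bool (z = y + elem [s0] \<and> s = inv_letter s0)"

lemma step4:
  "sideI y s0 (z + elem [s1, s2, s3, s4]) - sideI y s0 z =
     St y s0 z s1 + St y s0 (z + elem [s1]) s2 + St y s0 (z + elem [s1] + elem [s2]) s3
     + St y s0 (z + elem [s1] + elem [s2] + elem [s3]) s4"
proof -
  have e: "z + elem [s1, s2, s3, s4] = z + elem [s1] + elem [s2] + elem [s3] + elem [s4]"
    unfolding elem4 by (simp add: add.assoc)
  show ?thesis unfolding e St_def step[symmetric] by simp
qed

lemma eq_plus_iff: fixes X y g :: "'a::group_add" shows "(X = y + g) \<longleftrightarrow> (y = X - g)"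
  by (metis add_diff_cancel diff_add_cancel)

definition Dc :: "letter \<Rightarrow> fg \<Rightarrow> fg \<Rightarrow> int" where
  "Dc s0 z y = sideI y s0 (z + elem beta) - sideI y s0 z"

lemma Dc_a: "Dc (Ga,True) z y = of_bool (y = z + eb) - of_bool (y = z + elem beta)"
proof -
  have "Dc (Ga,True) z y = of_bool (z + eb = y) - of_bool (z + eb + ea + - eb = y + ea)"
    unfolding Dc_def beta_def step4 St_def by (simp add: inv_letter_def elem_B ea_def[symmetric] eb_def[symmetric])
  also have "(z + eb + ea + - eb = y + ea) \<longleftrightarrow> (y = z + elem beta)"
  proof -
    have "z + eb + ea + - eb - ea = z + elem beta" by (simp add: elem_beta add.assoc)
    then show ?thesis using eq_plus_iff[of "z + eb + ea + - eb" y ea] by simp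
  qed
  finally show ?thesis by auto
qed

lemma Dc_b: "Dc (Gb,True) z y = of_bool (y = z) - of_bool (y = z + g2)"
proof -
  have "Dc (Gb,True) z y = of_bool (z = y) - of_bool (z + eb + ea = y + eb)"
    unfolding Dc_def beta_def step4 St_def by (simp add: inv_letter_def elem_B ea_def[symmetric] eb_def[symmetric])
  also have "(z + eb + ea = y + eb) \<longleftrightarrow> (y = z + g2)"
  proof -
    have "z + eb + ea - eb = z + g2" by (simp add: g2_eq add.assoc)
    then show ?thesis using eq_plus_iff[of "z + eb + ea" y eb] by simp
  qed
  finally show ?thesis by auto
qed

definition Pw :: "word \<Rightarrow> nat \<Rightarrow> fg" where "Pw w i = elem (phi (take i w))"
definition Cpos :: "word \<Rightarrow> nat set" where "Cpos w = {i. i < length w \<and> fst (w!i) = Gc}"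
definition base :: "word \<Rightarrow> nat \<Rightarrow> fg" where "base w i = (if snd (w!i) then Pw w i else Pw w (Suc i))"
definition sg :: "word \<Rightarrow> nat \<Rightarrow> int" where "sg w i = (if snd (w!i) then 1 else -1)"
definition D :: "word \<Rightarrow> letter \<Rightarrow> fg \<Rightarrow> nat \<Rightarrow> int" where
  "D w s0 y i = sideI y s0 (Pw w (Suc i)) - sideI y s0 (Pw w i)"
definition E :: "word \<Rightarrow> letter \<Rightarrow> fg set" where
  "E w s0 = {y. \<exists>i<length w. (w!i = s0 \<and> Pw w i = y) \<or> (w!i = inv_letter s0 \<and> Pw w i = y + elem [s0])}"

lemma PS: "i < length w \<Longrightarrow> Pw w (Suc i) = Pw w i + elem (phil (w!i))"
  unfolding Pw_def by (simp add: take_Suc_conv_app_nth phi_def elem_append)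

lemma phil_nonc: "fst x \<noteq> Gc \<Longrightarrow> phil x = [x]"
  by (cases x; rename_tac g e; case_tac g; case_tac e) auto

lemma D_c:
  assumes "i \<in> Cpos w"
  shows "D w s0 y i = sg w i * Dc s0 (base w i) y"
proof -
  have i: "i < length w" and c: "fst (w!i) = Gc" using assms by (auto simp: Cpos_def)
  show ?thesis
  proof (cases "snd (w!i)")
    case True
    then have wi: "w!i = (Gc,True)" using c by (cases "w!i") auto
    show ?thesis unfolding D_def Dc_def base_def sg_def PS[OF i] wi by simp
  next
    case False
    then have wi: "w!i = (Gc,False)" using c by (cases "w!i") auto
    have ps: "Pw w (Suc i) = Pw w i + - elem beta"
      using PS[OF i] by (simp add: wi elem_inv_word)
    have pi: "Pw w i = Pw w (Suc i) + elem beta" unfolding ps by (simp add: add.assoc)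
    show ?thesis unfolding D_def Dc_def base_def sg_def using False
      by (simp add: pi[symmetric] del: diff_conv_add_uminus)
  qed
qed

lemma D_ab:
  assumes "i < length w" "fst (w!i) \<noteq> Gc"
  shows "D w s0 y i = of_bool (Pw w i = y \<and> w!i = s0) - of_bool (Pw w i = y + elem [s0] \<and> w!i = inv_letter s0)"
  unfolding D_def PS[OF assms(1)] phil_nonc[OF assms(2)] step by simp

lemma tele:
  assumes "elem (phi w) = 0"
  shows "(\<Sum>i<length w. D w s0 y i) = 0"
proof -
  have "(\<Sum>i<length w. D w s0 y i) = sideI y s0 (Pw w (length w)) - sideI y s0 (Pw w 0)"
    unfolding D_def by (rule sum_lessThan_telescope)
  also have "Pw w (length w) = 0" using assms by (simp add: Pw_def)
  also have "Pw w 0 = 0" by (simp add: Pw_def phi_def)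
  finally show ?thesis by simp
qed

lemma K:
  assumes "elem (phi w) = 0" "(\<Sum>i\<in>Cpos w. sg w i * Dc s0 (base w i) y) \<noteq> 0"
  shows "y \<in> E w s0"
proof -
  define NC where "NC = {i. i < length w \<and> fst (w!i) \<noteq> Gc}"
  have un: "{..<length w} = Cpos w \<union> NC" by (auto simp: Cpos_def NC_def)
  have dj: "Cpos w \<inter> NC = {}" by (auto simp: Cpos_def NC_def)
  have fin: "finite (Cpos w)" "finite NC" by (auto simp: Cpos_def NC_def)
  have "(\<Sum>i<length w. D w s0 y i) = (\<Sum>i\<in>Cpos w. D w s0 y i) + (\<Sum>i\<in>NC. D w s0 y i)"
    unfolding un by (rule sum.union_disjoint[OF fin dj])
  moreover have "(\<Sum>i\<in>Cpos w. D w s0 y i) = (\<Sum>i\<in>Cpos w. sg w i * Dc s0 (base w i) y)"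
    by (rule sum.cong) (auto simp: D_c)
  ultimately have "(\<Sum>i\<in>NC. D w s0 y i) \<noteq> 0" using tele[OF assms(1)] assms(2) by simp
  then obtain i where i: "i \<in> NC" "D w s0 y i \<noteq> 0" by (meson sum.neutral)
  then have il: "i < length w" "fst (w!i) \<noteq> Gc" by (auto simp: NC_def)
  have "(Pw w i = y \<and> w!i = s0) \<or> (Pw w i = y + elem [s0] \<and> w!i = inv_letter s0)"
    using i(2) unfolding D_ab[OF il] by (auto split: if_splits)
  then show ?thesis unfolding E_def using il(1) by blast
qed

lemma card_E: "card (E w s0) \<le> card {i. i < length w \<and> fst (w!i) = fst s0}"
proof -
  let ?f = "\<lambda>i. if w!i = s0 then Pw w i else Pw w i - elem [s0]"
  have "E w s0 \<subseteq> ?f ` {i. i < length w \<and> fst (w!i) = fst s0}"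
  proof
    fix y assume "y \<in> E w s0"
    then obtain i where i: "i < length w" and
      h: "(w!i = s0 \<and> Pw w i = y) \<or> (w!i = inv_letter s0 \<and> Pw w i = y + elem [s0])"
      unfolding E_def by blast
    show "y \<in> ?f ` {i. i < length w \<and> fst (w!i) = fst s0}"
    proof (rule image_eqI[of _ _ i])
      show "y = ?f i" using h by (auto simp: add.assoc)
      show "i \<in> {i. i < length w \<and> fst (w!i) = fst s0}" using h i by (auto simp: inv_letter_def)
    qed
  qed
  then have "card (E w s0) \<le> card (?f ` {i. i < length w \<and> fst (w!i) = fst s0})"
    by (intro card_mono finite_imageI) auto
  also have "\<dots> \<le> card {i. i < length w \<and> fst (w!i) = fst s0}"
    by (rule card_image_le) auto
  finally show ?thesis .
qed

lemma count_ab_card: "count_ab w = card {i. i < length w \<and> fst (w!i) = Ga} + card {i. i < length w \<and> fst (w!i) = Gb}"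
proof -
  have "count_ab w = card {i. i < length w \<and> fst (w!i) \<noteq> Gc}"
    unfolding count_ab_def by (rule length_filter_conv_card)
  also have "{i. i < length w \<and> fst (w!i) \<noteq> Gc} = {i. i < length w \<and> fst (w!i) = Ga} \<union> {i. i < length w \<and> fst (w!i) = Gb}"
    by (auto intro: gen.exhaust)
  also have "card \<dots> = card {i. i < length w \<and> fst (w!i) = Ga} + card {i. i < length w \<and> fst (w!i) = Gb}"
    by (rule card_Un_disjoint) auto
  finally show ?thesis .
qed

lemma count_c_card: "count_c w = card (Cpos w)"
  unfolding count_c_def Cpos_def by (rule length_filter_conv_card)

fun psil :: "letter \<Rightarrow> word" where
  "psil (Ga,True) = [(Gb,False),(Ga,True),(Gb,True),(Ga,False),(Gb,True)]"
| "psil (Ga,False) = [(Gb,False),(Ga,True),(Gb,False),(Ga,False),(Gb,True)]"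
| "psil (Gb,True) = [(Gb,False),(Ga,False),(Gb,True)]"
| "psil (Gb,False) = [(Gb,False),(Ga,True),(Gb,True)]"
| "psil (Gc,e) = [(Gc,e)]"

fun alphal :: "letter \<Rightarrow> word" where
  "alphal (Ga,True) = [(Gb,True),(Ga,True),(Gb,False),(Ga,False),(Gb,False)]"
| "alphal (Ga,False) = [(Gb,True),(Ga,True),(Gb,True),(Ga,False),(Gb,False)]"
| "alphal (Gb,True) = [(Gb,True),(Ga,True),(Gb,False)]"
| "alphal (Gb,False) = [(Gb,True),(Ga,False),(Gb,False)]"
| "alphal (Gc,e) = [(Gc,e)]"

lemma inv_compat_psil: "inv_compat psil"
  unfolding inv_compat_def
proof
  fix x :: letter
  obtain g e where x: "x = (g, e)" by (cases x)
  show "psil (inv_letter x) = inv_word (psil x)"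
    by (cases g; cases e) (simp_all add: x inv_letter_def)
qed

lemma inv_compat_alphal: "inv_compat alphal"
  unfolding inv_compat_def
proof
  fix x :: letter
  obtain g e where x: "x = (g, e)" by (cases x)
  show "alphal (inv_letter x) = inv_word (alphal x)"
    by (cases g; cases e) (simp_all add: x inv_letter_def)
qed

lemma alpha_psi_letter: "elem (subst alphal (psil x)) = elem [x]"
proof -
  obtain g e where x: "x = (g, e)" by (cases x)
  show ?thesis unfolding elem_eq_iff
    by (cases g; cases e) (simp_all add: x inv_letter_def reduce_def)
qed

lemma alpha_psi_word: "elem (subst alphal (subst psil u)) = elem u"
proof (induction u)
  case Nil then show ?case by simp
next
  case (Cons x u)
  have "elem (subst alphal (subst psil (x # u))) = elem (subst alphal (psil x)) + elem (subst alphal (subst psil u))"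
    by (simp add: elem_append)
  also have "\<dots> = elem [x] + elem u" using Cons alpha_psi_letter by simp
  also have "\<dots> = elem (x # u)" using elem_Cons[of x u] by simp
  finally show ?case .
qed

definition psi :: "fg \<Rightarrow> fg" where "psi x = elem (subst psil (Rep_fg x))"

lemma psi_add: "psi (x + y) = psi x + psi y"
proof -
  have "Rep_fg (x + y) = reduce (Rep_fg x @ Rep_fg y)"
    by (simp add: plus_fg_def)
  then show ?thesis unfolding psi_def
    by (simp add: elem_subst_reduce[OF inv_compat_psil] elem_append)
qed

lemma psi_elem: "psi (elem u) = elem (subst psil u)"
  unfolding psi_def by (simp add: elem_subst_reduce[OF inv_compat_psil])

lemma inj_psi: "inj psi"
proof (rule injI)
  fix x y assume h: "psi x = psi y"
  have "x = elem (subst alphal (subst psil (Rep_fg x)))" using alpha_psi_word by simp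
  also have "\<dots> = elem (subst alphal (subst psil (Rep_fg y)))"
    using elem_subst_cong[OF inv_compat_alphal h[unfolded psi_def]] .
  also have "\<dots> = y" using alpha_psi_word by simp
  finally show "x = y" .
qed

lemma psi_g2: "psi g2 = eb"
  unfolding g2_def psi_elem eb_def elem_eq_iff by (simp add: reduce_def inv_letter_def)

definition g1 :: fg where "g1 = elem [(Gb,True),(Ga,True),(Gb,False),(Ga,False),(Gb,False)]"

lemma psi_g1: "psi g1 = ea"
  unfolding g1_def psi_elem ea_def elem_eq_iff by (simp add: reduce_def inv_letter_def)

lemma g1_eq: "g1 = elem beta - eb"
proof -
  have "elem beta - eb = elem beta + elem [(Gb,False)]" by (simp add: elem_B)
  also have "\<dots> = elem (beta @ [(Gb,False)])" by (simp add: elem_append)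
  also have "\<dots> = g1" by (simp add: g1_def beta_def)
  finally show ?thesis by simp
qed

definition F :: "letter \<Rightarrow> fg \<Rightarrow> fg" where
  "F s0 t = (if Rep_fg t \<noteq> [] \<and> last (Rep_fg t) = inv_letter s0 then t else t + elem [s0])"

lemma F_last: "Rep_fg (F s0 t) \<noteq> [] \<and> last (Rep_fg (F s0 t)) =
   (if Rep_fg t \<noteq> [] \<and> last (Rep_fg t) = inv_letter s0 then inv_letter s0 else s0)"
  by (auto simp: F_def Rep_plus_letter)

lemma F_inj: "inj (F s0)"
proof (rule injI)
  fix t t' assume h: "F s0 t = F s0 t'"
  have l: "last (Rep_fg (F s0 t)) = last (Rep_fg (F s0 t'))" by (simp only: h)
  let ?c = "\<lambda>t. Rep_fg t \<noteq> [] \<and> last (Rep_fg t) = inv_letter s0"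
  have lt: "last (Rep_fg (F s0 t)) = (if ?c t then inv_letter s0 else s0)" using F_last[of s0 t] by blast
  have lt': "last (Rep_fg (F s0 t')) = (if ?c t' then inv_letter s0 else s0)" using F_last[of s0 t'] by blast
  show "t = t'"
  proof (cases "?c t")
    case True
    show ?thesis
    proof (cases "?c t'")
      case True2: True
      have "F s0 t = t" "F s0 t' = t'" unfolding F_def using True True2 by auto
      then show ?thesis using h by metis
    next
      case False
      have "inv_letter s0 = s0" using l unfolding lt lt' if_P[OF True] if_not_P[OF False] .
      then show ?thesis using inv_neq(1) by blast
    qed
  next
    case False
    show ?thesis
    proof (cases "?c t'")
      case True
      have "s0 = inv_letter s0" using l unfolding lt lt' if_P[OF True] if_not_P[OF False] .
      then show ?thesis using inv_neq(2) by blast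
    next
      case False2: False
      have f: "F s0 t = t + elem [s0]" "F s0 t' = t' + elem [s0]" unfolding F_def using False False2 by auto
      have "t + elem [s0] = t' + elem [s0]" using h unfolding f .
      then show ?thesis by simp
    qed
  qed
qed

lemma tree_count:
  assumes "finite T"
  shows "card {t\<in>T. t + ea \<in> T} + card {t\<in>T. t + eb \<in> T} \<le> card T"
proof -
  let ?A = "{t\<in>T. t + ea \<in> T}" and ?B = "{t\<in>T. t + eb \<in> T}"
  have sA: "F (Ga,True) ` ?A \<subseteq> T" by (auto simp: F_def ea_def)
  have sB: "F (Gb,True) ` ?B \<subseteq> T" by (auto simp: F_def eb_def)
  have dj: "F (Ga,True) ` ?A \<inter> F (Gb,True) ` ?B = {}"
  proof (rule ccontr)
    assume "F (Ga,True) ` ?A \<inter> F (Gb,True) ` ?B \<noteq> {}"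
    then obtain t t' where "F (Ga,True) t = F (Gb,True) t'" by blast
    then have "fst (last (Rep_fg (F (Ga,True) t))) = fst (last (Rep_fg (F (Gb,True) t')))" by simp
    then show False using F_last[of "(Ga,True)" t] F_last[of "(Gb,True)" t']
      by (simp add: inv_letter_def split: if_splits)
  qed
  have c1: "card (F (Ga,True) ` ?A) = card ?A" by (rule card_image) (rule inj_on_subset[OF F_inj subset_UNIV])
  have c2: "card (F (Gb,True) ` ?B) = card ?B" by (rule card_image) (rule inj_on_subset[OF F_inj subset_UNIV])
  have "card ?A + card ?B = card (F (Ga,True) ` ?A) + card (F (Gb,True) ` ?B)"
    using c1 c2 by simp
  also have "\<dots> = card (F (Ga,True) ` ?A \<union> F (Gb,True) ` ?B)"
    using assms sA sB dj by (intro card_Un_disjoint[symmetric]) (auto intro: finite_subset)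
  also have "\<dots> \<le> card T" using sA sB assms by (intro card_mono) auto
  finally show ?thesis .
qed

lemma psi_count:
  assumes "finite S" "psi g = e"
  shows "card {z\<in>S. z + g \<in> S} = card {t\<in>psi ` S. t + e \<in> psi ` S}"
proof -
  have "psi ` {z\<in>S. z + g \<in> S} = {t\<in>psi ` S. t + e \<in> psi ` S}"
  proof
    show "psi ` {z\<in>S. z + g \<in> S} \<subseteq> {t\<in>psi ` S. t + e \<in> psi ` S}"
      using assms(2) by (auto simp: psi_add[symmetric])
    show "{t\<in>psi ` S. t + e \<in> psi ` S} \<subseteq> psi ` {z\<in>S. z + g \<in> S}"
    proof
      fix t assume "t \<in> {t\<in>psi ` S. t + e \<in> psi ` S}"
      then obtain z z' where z: "z \<in> S" "t = psi z" and z': "z' \<in> S" "psi z + e = psi z'" by auto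
      then have "psi (z + g) = psi z'" using assms(2) by (simp add: psi_add)
      then have "z + g = z'" using inj_psi by (simp add: inj_eq)
      then show "t \<in> psi ` {z\<in>S. z + g \<in> S}" using z z' by auto
    qed
  qed
  moreover have "card (psi ` {z\<in>S. z + g \<in> S}) = card {z\<in>S. z + g \<in> S}"
    by (rule card_image) (rule inj_on_subset[OF inj_psi subset_UNIV])
  ultimately show ?thesis by simp
qed

lemma In_count:
  assumes "finite S"
  shows "card {z\<in>S. z + g1 \<in> S} + card {z\<in>S. z + g2 \<in> S} \<le> card S"
proof -
  have "card {z\<in>S. z + g1 \<in> S} + card {z\<in>S. z + g2 \<in> S}
     = card {t\<in>psi ` S. t + ea \<in> psi ` S} + card {t\<in>psi ` S. t + eb \<in> psi ` S}"
    using psi_count[OF assms psi_g1] psi_count[OF assms psi_g2] by simp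
  also have "\<dots> \<le> card (psi ` S)" by (rule tree_count) (use assms in simp)
  also have "\<dots> = card S" by (rule card_image) (rule inj_on_subset[OF inj_psi subset_UNIV])
  finally show ?thesis .
qed

lemma split_adj: "Suc i < length w \<Longrightarrow> w = take i w @ [w!i, w!Suc i] @ drop (Suc (Suc i)) w"
proof -
  assume h: "Suc i < length w"
  have "drop i w = w!i # w!Suc i # drop (Suc (Suc i)) w"
    using h by (simp add: Cons_nth_drop_Suc)
  then show ?thesis by (metis append_Cons append_Nil append_take_drop_id)
qed

lemma split_ends: "2 \<le> length w \<Longrightarrow> w = hd w # butlast (tl w) @ [last w]"
  by (cases w) auto

lemma split3: "i \<le> j \<Longrightarrow> j \<le> length w \<Longrightarrow> w = take i w @ take (j - i) (drop i w) @ drop j w"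
proof -
  assume "i \<le> j" "j \<le> length w"
  then have "take i w @ take (j - i) (drop i w) = take j w"
    by (metis le_add_diff_inverse take_add)
  then show ?thesis by (metis append.assoc append_take_drop_id)
qed

lemma Pw_split: "i \<le> j \<Longrightarrow> Pw w j = Pw w i + elem (phi (take (j - i) (drop i w)))"
proof -
  assume "i \<le> j"
  then have "take j w = take i w @ take (j - i) (drop i w)"
    by (metis le_add_diff_inverse take_add)
  then show ?thesis unfolding Pw_def by (simp add: Phi_append)
qed

lemma sum_single:
  assumes "finite A" "i0 \<in> A" "\<And>i. i \<in> A \<Longrightarrow> f i = (if i = i0 then c else 0)"
  shows "sum f A = (c :: int)"
proof -
  have "sum f A = (\<Sum>i\<in>A. if i = i0 then c else 0)" by (rule sum.cong) (use assms(3) in auto)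
  also have "\<dots> = c" using assms(1,2) by (simp add: sum.delta)
  finally show ?thesis .
qed

lemma card_add_img: "card ((\<lambda>z. z + (c::fg)) ` A) = card A"
  by (rule card_image) (auto simp: inj_on_def)

lemma card_not_in: "finite S \<Longrightarrow> card {z\<in>S. f z \<notin> S} = card S - card {z\<in>S. f z \<in> S}"
proof -
  assume f: "finite S"
  have "{z\<in>S. f z \<notin> S} = S - {z\<in>S. f z \<in> S}" by auto
  then show ?thesis using f by (simp add: card_Diff_subset)
qed

lemma card_minus_in: "finite S \<Longrightarrow> card {z\<in>S. z - g \<in> S} = card {z\<in>S. z + (g::fg) \<in> S}"
proof -
  assume f: "finite S"
  have "(\<lambda>z. z + g) ` {z\<in>S. z + g \<in> S} = {z\<in>S. z - g \<in> S}"
  proof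
    show "(\<lambda>z. z + g) ` {z\<in>S. z + g \<in> S} \<subseteq> {z\<in>S. z - g \<in> S}" by (auto simp: add.assoc)
    show "{z\<in>S. z - g \<in> S} \<subseteq> (\<lambda>z. z + g) ` {z\<in>S. z + g \<in> S}"
    proof
      fix z assume "z \<in> {z\<in>S. z - g \<in> S}"
      then show "z \<in> (\<lambda>z. z + g) ` {z\<in>S. z + g \<in> S}"
        by (intro image_eqI[of _ _ "z - g"]) (auto simp: add.assoc)
    qed
  qed
  then show ?thesis using card_add_img[of g "{z\<in>S. z + g \<in> S}"] by simp
qed

lemma finite_E: "finite (E w s0)"
proof -
  have "E w s0 \<subseteq> Pw w ` {..<length w} \<union> (\<lambda>i. Pw w i - elem [s0]) ` {..<length w}"
  proof
    fix y assume "y \<in> E w s0"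
    then obtain i where i: "i < length w" and
      h: "(w!i = s0 \<and> Pw w i = y) \<or> (w!i = inv_letter s0 \<and> Pw w i = y + elem [s0])"
      unfolding E_def by blast
    show "y \<in> Pw w ` {..<length w} \<union> (\<lambda>i. Pw w i - elem [s0]) ` {..<length w}"
    proof (cases "Pw w i = y")
      case True then show ?thesis using i by auto
    next
      case False
      then have "Pw w i = y + elem [s0]" using h by auto
      then have "y = Pw w i - elem [s0]" by (simp add: add.assoc)
      then show ?thesis using i by auto
    qed
  qed
  then show ?thesis by (rule finite_subset) simp
qed

lemma sg_nz: "sg w i \<noteq> 0" by (simp add: sg_def)

lemma fin_Cpos: "finite (Cpos w)" by (simp add: Cpos_def)

lemma base_eq_iff:
  assumes "inj_on (base w) (Cpos w)" "i \<in> Cpos w" "i0 \<in> Cpos w"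
  shows "base w i = base w i0 \<longleftrightarrow> i = i0"
  using assms by (auto simp: inj_on_def)

lemma QA1:
  assumes H0: "elem (phi w) = 0" and inj: "inj_on (base w) (Cpos w)" and i0: "i0 \<in> Cpos w"
    and nz: "base w i0 + g1 \<notin> base w ` Cpos w"
  shows "base w i0 + elem beta \<in> E w (Ga,True)"
proof -
  let ?z = "base w i0"
  have "(\<Sum>i\<in>Cpos w. sg w i * Dc (Ga,True) (base w i) (?z + elem beta)) = - sg w i0"
  proof (rule sum_single[OF fin_Cpos i0])
    fix i assume i: "i \<in> Cpos w"
    have n1: "\<not> (?z + elem beta = base w i + eb)"
    proof
      assume "?z + elem beta = base w i + eb"
      then have "base w i = ?z + elem beta - eb" by (rule eq_plus_iff[THEN iffD1])
      also have "\<dots> = ?z + g1" by (simp add: g1_eq add.assoc)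
      finally show False using nz i by (metis image_eqI)
    qed
    have n2: "(?z + elem beta = base w i + elem beta) \<longleftrightarrow> i = i0"
      using base_eq_iff[OF inj i i0] by auto
    show "sg w i * Dc (Ga,True) (base w i) (?z + elem beta) = (if i = i0 then - sg w i0 else 0)"
      unfolding Dc_a using n1 n2 by auto
  qed
  then show ?thesis using K[OF H0] sg_nz by auto
qed

lemma QA2:
  assumes H0: "elem (phi w) = 0" and inj: "inj_on (base w) (Cpos w)" and i0: "i0 \<in> Cpos w"
    and nz: "base w i0 - g1 \<notin> base w ` Cpos w"
  shows "base w i0 + eb \<in> E w (Ga,True)"
proof -
  let ?z = "base w i0"
  have "(\<Sum>i\<in>Cpos w. sg w i * Dc (Ga,True) (base w i) (?z + eb)) = sg w i0"
  proof (rule sum_single[OF fin_Cpos i0])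
    fix i assume i: "i \<in> Cpos w"
    have n1: "\<not> (?z + eb = base w i + elem beta)"
    proof
      assume "?z + eb = base w i + elem beta"
      then have "base w i = ?z + eb - elem beta" by (rule eq_plus_iff[THEN iffD1])
      also have "\<dots> = ?z - g1" by (simp add: g1_eq add.assoc minus_add)
      finally show False using nz i by (metis image_eqI)
    qed
    have n2: "(?z + eb = base w i + eb) \<longleftrightarrow> i = i0"
      using base_eq_iff[OF inj i i0] by auto
    show "sg w i * Dc (Ga,True) (base w i) (?z + eb) = (if i = i0 then sg w i0 else 0)"
      unfolding Dc_a using n1 n2 by auto
  qed
  then show ?thesis using K[OF H0] sg_nz by auto
qed

lemma QB1:
  assumes H0: "elem (phi w) = 0" and inj: "inj_on (base w) (Cpos w)" and i0: "i0 \<in> Cpos w"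
    and nz: "base w i0 - g2 \<notin> base w ` Cpos w"
  shows "base w i0 \<in> E w (Gb,True)"
proof -
  let ?z = "base w i0"
  have "(\<Sum>i\<in>Cpos w. sg w i * Dc (Gb,True) (base w i) ?z) = sg w i0"
  proof (rule sum_single[OF fin_Cpos i0])
    fix i assume i: "i \<in> Cpos w"
    have n1: "\<not> (?z = base w i + g2)"
    proof
      assume "?z = base w i + g2"
      then have "base w i = ?z - g2" by (rule eq_plus_iff[THEN iffD1])
      then show False using nz i by (metis image_eqI)
    qed
    have n2: "(?z = base w i) \<longleftrightarrow> i = i0"
      using base_eq_iff[OF inj i i0] by auto
    show "sg w i * Dc (Gb,True) (base w i) ?z = (if i = i0 then sg w i0 else 0)"
      unfolding Dc_b using n1 n2 by auto
  qed
  then show ?thesis using K[OF H0] sg_nz by auto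
qed

lemma QB2:
  assumes H0: "elem (phi w) = 0" and inj: "inj_on (base w) (Cpos w)" and i0: "i0 \<in> Cpos w"
    and nz: "base w i0 + g2 \<notin> base w ` Cpos w"
  shows "base w i0 + g2 \<in> E w (Gb,True)"
proof -
  let ?z = "base w i0"
  have "(\<Sum>i\<in>Cpos w. sg w i * Dc (Gb,True) (base w i) (?z + g2)) = - sg w i0"
  proof (rule sum_single[OF fin_Cpos i0])
    fix i assume i: "i \<in> Cpos w"
    have n1: "\<not> (?z + g2 = base w i)"
    proof
      assume "?z + g2 = base w i"
      then show False using nz i by (metis image_eqI)
    qed
    have n2: "(?z + g2 = base w i + g2) \<longleftrightarrow> i = i0"
      using base_eq_iff[OF inj i i0] by auto
    show "sg w i * Dc (Gb,True) (base w i) (?z + g2) = (if i = i0 then - sg w i0 else 0)"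
      unfolding Dc_b using n1 n2 by auto
  qed
  then show ?thesis using K[OF H0] sg_nz by auto
qed

lemma base_inj_TF:
  assumes adj: "\<And>i. Suc i < length w \<Longrightarrow> w!(Suc i) \<noteq> inv_letter (w!i)"
    and wrap: "2 \<le> length w \<Longrightarrow> last w \<noteq> inv_letter (hd w)"
    and Peq: "\<And>a b. Pw w a = Pw w b \<Longrightarrow> a \<le> length w \<Longrightarrow> b \<le> length w \<Longrightarrow>
                 a = b \<or> (a = 0 \<and> b = length w) \<or> (a = length w \<and> b = 0)"
    and i: "i < length w" "w!i = (Gc,True)" and j: "j < length w" "w!j = (Gc,False)"
    and eq: "Pw w i = Pw w (Suc j)"
  shows False
proof -
  have "i = Suc j \<or> (i = 0 \<and> Suc j = length w) \<or> (i = length w \<and> Suc j = 0)"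
    using Peq[OF eq] i j by simp
  then show False
  proof (elim disjE)
    assume "i = Suc j"
    then show False using adj[of j] i j by (simp add: inv_letter_def)
  next
    assume h: "i = 0 \<and> Suc j = length w"
    have "i \<noteq> j" using i j by auto
    then have n2: "2 \<le> length w" using h by auto
    have wne: "w \<noteq> []" using i(1) by auto
    have "hd w = w!0" by (rule hd_conv_nth[OF wne])
    moreover have "last w = w!j"
    proof -
      have "last w = w!(length w - 1)" by (rule last_conv_nth[OF wne])
      moreover have "length w - 1 = j" using h by linarith
      ultimately show ?thesis by simp
    qed
    ultimately show False using wrap[OF n2] h i j by (simp add: inv_letter_def)
  next
    assume "i = length w \<and> Suc j = 0" then show False by simp
  qed
qed

lemma simple_core:
  assumes H0: "elem (phi w) = 0"
    and adj: "\<And>i. Suc i < length w \<Longrightarrow> w!(Suc i) \<noteq> inv_letter (w!i)"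
    and wrap: "2 \<le> length w \<Longrightarrow> last w \<noteq> inv_letter (hd w)"
    and dist: "\<And>i j. i < j \<Longrightarrow> j \<le> length w \<Longrightarrow> 0 < i \<or> j < length w \<Longrightarrow> Pw w i \<noteq> Pw w j"
  shows "2 * count_c w \<le> count_ab w"
proof -
  have Peq: "a = b \<or> (a = 0 \<and> b = length w) \<or> (a = length w \<and> b = 0)"
    if "Pw w a = Pw w b" "a \<le> length w" "b \<le> length w" for a b
  proof (cases a b rule: linorder_cases)
    case less
    then have "\<not> (0 < a \<or> b < length w)" using dist[OF less] that by blast
    then have "a = 0 \<and> b = length w" using that(3) by linarith
    then show ?thesis by simp
  next
    case equal then show ?thesis by simp
  next
    case greater
    then have "\<not> (0 < b \<or> a < length w)" using dist[OF greater] that by metis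
    then have "b = 0 \<and> a = length w" using that(2) by linarith
    then show ?thesis by simp
  qed
  have inj: "inj_on (base w) (Cpos w)"
  proof (rule inj_onI)
    fix i j assume i: "i \<in> Cpos w" and j: "j \<in> Cpos w" and e: "base w i = base w j"
    have il: "i < length w" "fst (w!i) = Gc" and jl: "j < length w" "fst (w!j) = Gc"
      using i j by (auto simp: Cpos_def)
    show "i = j"
    proof (cases "snd (w!i)")
      case True
      then have wi: "w!i = (Gc,True)" using il by (cases "w!i") auto
      show ?thesis
      proof (cases "snd (w!j)")
        case True
        then have "Pw w i = Pw w j" using e \<open>snd (w!i)\<close> by (simp add: base_def)
        then show ?thesis using Peq[of i j] il jl by auto
      next
        case False
        then have wj: "w!j = (Gc,False)" using jl by (cases "w!j") auto
        have "Pw w i = Pw w (Suc j)" using e \<open>snd (w!i)\<close> False by (simp add: base_def)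
        then show ?thesis using base_inj_TF[OF adj wrap Peq il(1) wi jl(1) wj] by blast
      qed
    next
      case False
      then have wi: "w!i = (Gc,False)" using il by (cases "w!i") auto
      show ?thesis
      proof (cases "snd (w!j)")
        case True
        then have wj: "w!j = (Gc,True)" using jl by (cases "w!j") auto
        have "Pw w j = Pw w (Suc i)" using e \<open>\<not> snd (w!i)\<close> True by (simp add: base_def)
        then show ?thesis using base_inj_TF[OF adj wrap Peq jl(1) wj il(1) wi] by blast
      next
        case False2: False
        then have "Pw w (Suc i) = Pw w (Suc j)" using e False by (simp add: base_def)
        then show ?thesis using Peq[of "Suc i" "Suc j"] il jl by auto
      qed
    qed
  qed
  define S where "S = base w ` Cpos w"
  have finS: "finite S" unfolding S_def by (simp add: fin_Cpos)
  define k where "k = card S"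
  have kc: "k = count_c w" unfolding k_def S_def count_c_card by (rule card_image[OF inj])
  define I1 where "I1 = card {z\<in>S. z + g1 \<in> S}"
  define I2 where "I2 = card {z\<in>S. z + g2 \<in> S}"
  have I12: "I1 + I2 \<le> k" unfolding I1_def I2_def k_def by (rule In_count[OF finS])
  define A1 where "A1 = {z\<in>S. z + g1 \<notin> S}"
  define A2 where "A2 = {z\<in>S. z - g1 \<notin> S}"
  define B1 where "B1 = {z\<in>S. z - g2 \<notin> S}"
  define B2 where "B2 = {z\<in>S. z + g2 \<notin> S}"
  have cA1: "card A1 = k - I1" unfolding A1_def I1_def k_def by (rule card_not_in[OF finS])
  have cA2: "card A2 = k - I1" unfolding A2_def I1_def k_def
    using card_not_in[OF finS, of "\<lambda>z. z - g1"] card_minus_in[OF finS, of g1] by simp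
  have cB1: "card B1 = k - I2" unfolding B1_def I2_def k_def
    using card_not_in[OF finS, of "\<lambda>z. z - g2"] card_minus_in[OF finS, of g2] by simp
  have cB2: "card B2 = k - I2" unfolding B2_def I2_def k_def by (rule card_not_in[OF finS])
  have inS: "\<exists>i0\<in>Cpos w. z = base w i0" if "z \<in> S" for z using that unfolding S_def by auto
  have subA: "(\<lambda>z. z + elem beta) ` A1 \<union> (\<lambda>z. z + eb) ` A2 \<subseteq> E w (Ga,True)"
  proof -
    have "z + elem beta \<in> E w (Ga,True)" if zA: "z \<in> A1" for z
    proof -
      obtain i0 where i0: "i0 \<in> Cpos w" "z = base w i0" using inS zA unfolding A1_def by blast
      show ?thesis unfolding i0(2) by (rule QA1[OF H0 inj i0(1)]) (use zA i0 in \<open>simp add: A1_def S_def\<close>)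
    qed
    moreover have "z + eb \<in> E w (Ga,True)" if zA: "z \<in> A2" for z
    proof -
      obtain i0 where i0: "i0 \<in> Cpos w" "z = base w i0" using inS zA unfolding A2_def by blast
      show ?thesis unfolding i0(2) by (rule QA2[OF H0 inj i0(1)]) (use zA i0 in \<open>simp add: A2_def S_def\<close>)
    qed
    ultimately show ?thesis by auto
  qed
  have djA: "(\<lambda>z. z + elem beta) ` A1 \<inter> (\<lambda>z. z + eb) ` A2 = {}"
  proof (rule ccontr)
    assume "(\<lambda>z. z + elem beta) ` A1 \<inter> (\<lambda>z. z + eb) ` A2 \<noteq> {}"
    then obtain z z' where z: "z \<in> A1" and z': "z' \<in> A2" and e: "z + elem beta = z' + eb" by auto
    have "z' = z + elem beta - eb" using e by (rule eq_plus_iff[THEN iffD1])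
    also have "\<dots> = z + g1" by (simp add: g1_eq add.assoc)
    finally show False using z z' unfolding A1_def A2_def by auto
  qed
  have subB: "B1 \<union> (\<lambda>z. z + g2) ` B2 \<subseteq> E w (Gb,True)"
  proof -
    have "z \<in> E w (Gb,True)" if zA: "z \<in> B1" for z
    proof -
      obtain i0 where i0: "i0 \<in> Cpos w" "z = base w i0" using inS zA unfolding B1_def by blast
      show ?thesis unfolding i0(2) by (rule QB1[OF H0 inj i0(1)]) (use zA i0 in \<open>simp add: B1_def S_def\<close>)
    qed
    moreover have "z + g2 \<in> E w (Gb,True)" if zA: "z \<in> B2" for z
    proof -
      obtain i0 where i0: "i0 \<in> Cpos w" "z = base w i0" using inS zA unfolding B2_def by blast
      show ?thesis unfolding i0(2) by (rule QB2[OF H0 inj i0(1)]) (use zA i0 in \<open>simp add: B2_def S_def\<close>)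
    qed
    ultimately show ?thesis by auto
  qed
  have djB: "B1 \<inter> (\<lambda>z. z + g2) ` B2 = {}"
  proof (rule ccontr)
    assume "B1 \<inter> (\<lambda>z. z + g2) ` B2 \<noteq> {}"
    then obtain z' where z': "z' \<in> B2" "z' + g2 \<in> B1" by auto
    then show False unfolding B1_def B2_def by auto
  qed
  have finA: "finite A1" "finite A2" "finite B1" "finite B2"
    using finS unfolding A1_def A2_def B1_def B2_def by auto
  have "card A1 + card A2 = card ((\<lambda>z. z + elem beta) ` A1) + card ((\<lambda>z. z + eb) ` A2)"
    by (simp add: card_add_img)
  also have "\<dots> = card ((\<lambda>z. z + elem beta) ` A1 \<union> (\<lambda>z. z + eb) ` A2)"
    using finA djA by (intro card_Un_disjoint[symmetric]) auto
  also have "\<dots> \<le> card (E w (Ga,True))" by (rule card_mono[OF finite_E subA])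
  also have "\<dots> \<le> card {i. i < length w \<and> fst (w!i) = Ga}" using card_E[of w "(Ga,True)"] by simp
  finally have ca: "card A1 + card A2 \<le> card {i. i < length w \<and> fst (w!i) = Ga}" .
  have "card B1 + card B2 = card B1 + card ((\<lambda>z. z + g2) ` B2)"
    by (simp add: card_add_img)
  also have "\<dots> = card (B1 \<union> (\<lambda>z. z + g2) ` B2)"
    using finA djB by (intro card_Un_disjoint[symmetric]) auto
  also have "\<dots> \<le> card (E w (Gb,True))" by (rule card_mono[OF finite_E subB])
  also have "\<dots> \<le> card {i. i < length w \<and> fst (w!i) = Gb}" using card_E[of w "(Gb,True)"] by simp
  finally have cb: "card B1 + card B2 \<le> card {i. i < length w \<and> fst (w!i) = Gb}" .
  have "count_ab w \<ge> (k - I1) + (k - I1) + (k - I2) + (k - I2)"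
    using ca cb cA1 cA2 cB1 cB2 count_ab_card[of w] by simp
  then show ?thesis using I12 kc by linarith
qed

lemma simple:
  assumes "elem (phi w) = 0"
    and H1: "\<not> (\<exists>xs x ys. w = xs @ [x, inv_letter x] @ ys)"
    and H2: "\<not> (\<exists>x m. w = x # m @ [inv_letter x])"
    and H3: "\<not> (\<exists>s t v. w = s @ t @ v \<and> t \<noteq> [] \<and> s @ v \<noteq> [] \<and> elem (phi t) = 0)"
  shows "2 * count_c w \<le> count_ab w"
proof (rule simple_core[OF assms(1)])
  fix i assume i: "Suc i < length w"
  show "w!(Suc i) \<noteq> inv_letter (w!i)"
  proof
    assume "w!(Suc i) = inv_letter (w!i)"
    then have "w = take i w @ [w!i, inv_letter (w!i)] @ drop (Suc (Suc i)) w"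
      using split_adj[OF i] by simp
    then show False using H1 by blast
  qed
next
  assume n: "2 \<le> length w"
  show "last w \<noteq> inv_letter (hd w)"
  proof
    assume "last w = inv_letter (hd w)"
    then have "w = hd w # butlast (tl w) @ [inv_letter (hd w)]"
      using split_ends[OF n] by simp
    then show False using H2 by blast
  qed
next
  fix i j assume ij: "i < j" "j \<le> length w" "0 < i \<or> j < length w"
  show "Pw w i \<noteq> Pw w j"
  proof
    assume e: "Pw w i = Pw w j"
    let ?s = "take i w" and ?t = "take (j - i) (drop i w)" and ?v = "drop j w"
    have w: "w = ?s @ ?t @ ?v" using split3[of i j w] ij by simp
    have t: "?t \<noteq> []" using ij by simp
    have sv: "?s @ ?v \<noteq> []" using ij by auto
    have h: "Pw w i + elem (phi ?t) = Pw w i" using Pw_split[of i j w] ij e by simp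
    have "elem (phi ?t) = - Pw w i + (Pw w i + elem (phi ?t))" by (simp only: minus_add_cancel)
    also have "\<dots> = 0" unfolding h by simp
    finally have "elem (phi ?t) = 0" .
    then show False using H3 w t sv by blast
  qed
qed

lemma main: "elem (phi w) = 0 \<Longrightarrow> 2 * area w \<le> count_ab w"
proof (induction "length w" arbitrary: w rule: less_induct)
  case less
  show ?case
  proof (cases "\<exists>xs x ys. w = xs @ [x, inv_letter x] @ ys")
    case True
    then obtain xs x ys where w: "w = xs @ [x, inv_letter x] @ ys" by blast
    have e: "elem w = elem (xs @ ys)" by (simp add: w elem_append)
    have p: "elem (phi (xs @ ys)) = 0" using less.prems Phi_cong[OF e] by simp
    have "2 * area (xs @ ys) \<le> count_ab (xs @ ys)"
      by (rule less.hyps[OF _ p]) (simp add: w)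
    moreover have "area w = area (xs @ ys)" by (rule area_cong[OF e])
    moreover have "count_ab (xs @ ys) \<le> count_ab w" by (simp add: w count_ab_def)
    ultimately show ?thesis by simp
  next
    case False1: False
    show ?thesis
    proof (cases "\<exists>x m. w = x # m @ [inv_letter x]")
      case True
      then obtain x m where w: "w = x # m @ [inv_letter x]" by blast
      have i1: "elem [inv_letter x] = - elem [x]" using elem_inv_word[of "[x]"] by simp
      have e: "elem w = elem [x] + elem m - elem [x]"
        unfolding w using elem_append[of "[x]" "m @ [inv_letter x]"] elem_append[of m "[inv_letter x]"] i1
        by (simp add: add.assoc)
      have i2: "elem (phi [inv_letter x]) = - elem (phi [x])" using Phi_inv[of "[x]"] by simp
      have "elem (phi w) = elem (phi [x]) + elem (phi m) - elem (phi [x])"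
        unfolding w using Phi_append[of "[x]" "m @ [inv_letter x]"] Phi_append[of m "[inv_letter x]"] i2
        by (simp add: add.assoc)
      then have "elem (phi [x]) + elem (phi m) - elem (phi [x]) = 0" using less.prems by simp
      then have p: "elem (phi m) = 0" by (rule grp_conj_zero)
      have "2 * area m \<le> count_ab m"
        by (rule less.hyps[OF _ p]) (simp add: w)
      moreover have "area w \<le> area m" by (rule area_conj_le[OF e p])
      moreover have "count_ab m \<le> count_ab w" by (simp add: w count_ab_def)
      ultimately show ?thesis by simp
    next
      case False2: False
      show ?thesis
      proof (cases "\<exists>s t v. w = s @ t @ v \<and> t \<noteq> [] \<and> s @ v \<noteq> [] \<and> elem (phi t) = 0")
        case True
        then obtain s t v where w: "w = s @ t @ v" and t: "t \<noteq> []" and sv: "s @ v \<noteq> []"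
          and pt: "elem (phi t) = 0" by blast
        have psv: "elem (phi (s @ v)) = 0"
          using less.prems pt by (simp add: w Phi_append)
        have e1: "elem w = elem (s @ v) + elem (inv_word v @ t @ v)"
          by (simp add: w elem_append elem_inv_word add.assoc)
        have e2: "elem (inv_word v @ t @ v) = elem (inv_word v) + elem t - elem (inv_word v)"
          by (simp add: elem_append elem_inv_word add.assoc)
        have p2: "elem (phi (inv_word v @ t @ v)) = 0"
          using pt by (simp add: Phi_append Phi_inv)
        have "area w \<le> area (s @ v) + area (inv_word v @ t @ v)"
          by (rule area_split_le[OF e1 psv p2])
        moreover have "area (inv_word v @ t @ v) \<le> area t" by (rule area_conj_le[OF e2 pt])
        moreover have "2 * area (s @ v) \<le> count_ab (s @ v)"
          by (rule less.hyps[OF _ psv]) (use t in \<open>simp add: w\<close>)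
        moreover have "2 * area t \<le> count_ab t"
          by (rule less.hyps[OF _ pt]) (use sv in \<open>simp add: w\<close>)
        moreover have "count_ab w = count_ab (s @ v) + count_ab t" by (simp add: w count_ab_def)
        ultimately show ?thesis by simp
      next
        case False
        have "2 * count_c w \<le> count_ab w"
          by (rule simple[OF less.prems False1 False2 False])
        moreover have "area w \<le> count_c w" by (rule Phi_area(2)[OF less.prems])
        ultimately show ?thesis by simp
      qed
    qed
  qed
qed

theorem theorem1p2:
  fixes w :: word
  assumes "in_N w"
  shows "real (area w) \<le> real (ab_length w) / 2"
proof -
  have pw: "elem (phi w) = 0" by (rule in_N_Phi[OF assms])
  define v where "v = cyclic_reduction w"
  obtain g where g: "reduce w = g @ v @ inv_word g"
    using cyc_red_conj[of "reduce w"] unfolding v_def cyclic_reduction_def by blast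
  have e0: "elem w = elem (g @ v @ inv_word g)"
    using arg_cong[OF g, of elem] by simp
  have e: "elem w = elem g + elem v - elem g"
    unfolding e0 by (simp add: elem_append elem_inv_word add.assoc)
  have "elem (phi w) = elem (phi g) + elem (phi v) - elem (phi g)"
    unfolding Phi_cong[OF e0] by (simp add: Phi_append Phi_inv add.assoc)
  then have "elem (phi g) + elem (phi v) - elem (phi g) = 0" using pw by simp
  then have pv: "elem (phi v) = 0" by (rule grp_conj_zero)
  have "area w \<le> area v" by (rule area_conj_le[OF e pv])
  moreover have "2 * area v \<le> count_ab v" by (rule main[OF pv])
  moreover have "count_ab v = ab_length w" by (simp add: v_def ab_length_def count_ab_def)
  ultimately show ?thesis by simp
qed

end
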